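(* Assume $\kappa=\kappa^{<\kappa}$ and let $x\in S_\kappa$, $X=S_\kappa\setminus\{x\}$. If $V$ and $W$ are disjoint open subsets of $X$ each of $X$-type less than $\kappa$, then there is a clopen subset $A$ of $X$ with $V\subseteq A$ and $W\cap A=\emptyset$.
   Context: A space is zero-dimensional if it has a base of clopen sets. For a zero-dimensional space $X$ and an open $U\subseteq X$, the ($X$-)type $\tau(U)$ is the least cardinal $\tau$ such that $U$ is a union of $\tau$ many clopen subsets of $X$. A zero-dimensional space is an $F_\kappa$-space if every open subset of type less than $\kappa$ is $C^*$-embedded (every bounded continuous real-valued function on it extends continuously to the whole space). A space is a $G_\kappa$-space if every non-empty intersection of fewer than $\kappa$ open sets has non-empty interior. A $\kappa$-Parovičenko space is a compact Hausdorff zero-dimensional $F_\kappa$- and $G_\kappa$-space without isolated points (no weight restriction is imposed). If $\kappa=\kappa^{<\kappa}$ there is, up to homeomorphism, a unique $\kappa$-Parovičenko space of weight $\kappa$; it is denoted $S_\kappa$. *)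

theory Defs
  imports "HOL-Analysis.Analysis"
begin

unbundle cardinal_syntax

definition clopenin :: "'a topology \<Rightarrow> 'a set \<Rightarrow> bool" where
  "clopenin X C \<longleftrightarrow> openin X C \<and> closedin X C"

definition is_base :: "'a topology \<Rightarrow> 'a set set \<Rightarrow> bool" where
  "is_base X B \<longleftrightarrow> (\<forall>b\<in>B. openin X b) \<and> (\<forall>U. openin X U \<longrightarrow> (\<exists>C\<subseteq>B. \<Union>C = U))"

definition has_weight :: "'a topology \<Rightarrow> 'k set \<Rightarrow> bool" where
  "has_weight X K \<longleftrightarrow> (\<exists>B. is_base X B \<and> (card_of (B)) =o (card_of (K))) \<and> (\<forall>B. is_base X B \<longrightarrow> (card_of (K)) \<le>o (card_of (B)))"

definition zero_dim :: "'a topology \<Rightarrow> bool" where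
  "zero_dim X \<longleftrightarrow> (\<exists>B. is_base X B \<and> (\<forall>b\<in>B. clopenin X b))"

definition type_less :: "'a topology \<Rightarrow> 'k set \<Rightarrow> 'a set \<Rightarrow> bool" where
  "type_less X K U \<longleftrightarrow> (\<exists>F. (\<forall>C\<in>F. clopenin X C) \<and> \<Union>F = U \<and> (card_of (F)) <o (card_of (K)))"

definition C_star_embedded :: "'a topology \<Rightarrow> 'a set \<Rightarrow> bool" where
  "C_star_embedded X U \<longleftrightarrow>
     (\<forall>f. continuous_map (subtopology X U) euclideanreal f \<and> bounded (f ` U) \<longrightarrow>
        (\<exists>g. continuous_map X euclideanreal g \<and> (\<forall>y\<in>U. g y = f y)))"

definition F_kappa_space :: "'a topology \<Rightarrow> 'k set \<Rightarrow> bool" where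
  "F_kappa_space X K \<longleftrightarrow> zero_dim X \<and>
     (\<forall>U. openin X U \<and> type_less X K U \<longrightarrow> C_star_embedded X U)"

definition G_kappa_space :: "'a topology \<Rightarrow> 'k set \<Rightarrow> bool" where
  "G_kappa_space X K \<longleftrightarrow>
     (\<forall>F. (\<forall>U\<in>F. openin X U) \<and> (card_of (F)) <o (card_of (K)) \<and> topspace X \<inter> \<Inter>F \<noteq> {} \<longrightarrow>
        X interior_of (topspace X \<inter> \<Inter>F) \<noteq> {})"

definition kappa_Parovicenko :: "'a topology \<Rightarrow> 'k set \<Rightarrow> bool" where
  "kappa_Parovicenko X K \<longleftrightarrow> compact_space X \<and> Hausdorff_space X \<and> zero_dim X \<and>
     F_kappa_space X K \<and> G_kappa_space X K \<and> (\<forall>x\<in>topspace X. \<not> openin X {x})"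

definition kappa_eq_kappa_less_kappa :: "'k set \<Rightarrow> bool" where
  "kappa_eq_kappa_less_kappa K \<longleftrightarrow> (\<forall>L::'k set. (card_of (L)) <o (card_of (K)) \<longrightarrow> (card_of (Func L K)) \<le>o (card_of (K)))"

end

theory Submission imports Defs begin

lemma clopen_sep:
  assumes "compact_space S" "zero_dim S" "closedin S F" "closedin S G" "F \<inter> G = {}"
  shows "\<exists>B. clopenin S B \<and> F \<subseteq> B \<and> B \<inter> G = {}"
proof -
  obtain B0 where B0: "is_base S B0" "\<forall>b\<in>B0. clopenin S b"
    using assms(2) unfolding zero_dim_def by blast
  have cF: "compactin S F" using closedin_compact_space assms(1,3) by blast
  let ?U = "{b\<in>B0. b \<inter> G = {}}"
  have o: "openin S (topspace S - G)" using assms(4) by (simp add: closedin_def)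
  have bb: "\<exists>C\<subseteq>B0. \<Union>C = topspace S - G" using B0(1) o unfolding is_base_def by simp
  then obtain C where C: "C \<subseteq> B0" "\<Union>C = topspace S - G" by (elim exE conjE)
  have FT: "F \<subseteq> topspace S" using assms(3) by (rule closedin_subset)
  have cov: "F \<subseteq> \<Union>?U"
  proof
    fix y assume y: "y \<in> F"
    then have yT: "y \<in> topspace S - G" using FT assms(5) by blast
    then obtain c where "c \<in> C" "y \<in> c" using C(2) by blast
    then show "y \<in> \<Union>?U" using C by blast
  qed
  have opn: "\<forall>U\<in>?U. openin S U" using B0(2) unfolding clopenin_def by blast
  have ci: "(\<forall>U \<in> \<U>. openin S U) \<and> F \<subseteq> \<Union>\<U>
          \<longrightarrow> (\<exists>\<F>. finite \<F> \<and> \<F> \<subseteq> \<U> \<and> F \<subseteq> \<Union>\<F>)" for \<U>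
    using cF unfolding compactin_def by blast
  have "\<exists>\<F>. finite \<F> \<and> \<F> \<subseteq> ?U \<and> F \<subseteq> \<Union>\<F>"
    by (rule ci[of ?U, THEN mp]) (use cov opn in blast)
  then obtain F' where F': "finite F'" "F' \<subseteq> ?U" "F \<subseteq> \<Union>F'"
    by (elim exE conjE)
  have "openin S (\<Union>F')" using F'(2) B0(2) unfolding clopenin_def by blast
  moreover have "closedin S (\<Union>F')"
    by (rule closedin_Union[OF F'(1)]) (use F'(2) B0(2) in \<open>auto simp: clopenin_def\<close>)
  ultimately show ?thesis using F' unfolding clopenin_def by blast
qed

lemma core:
  assumes "compact_space S" "zero_dim S" "F_kappa_space S K"
    "openin S P" "openin S Q" "P \<inter> Q = {}" "type_less S K (P \<union> Q)"
  shows "\<exists>B. clopenin S B \<and> P \<subseteq> B \<and> B \<inter> Q = {}"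
proof -
  have oPQ: "openin S (P \<union> Q)" using assms(4,5) by (rule openin_Un)
  have ce: "C_star_embedded S (P \<union> Q)" using assms(3,7) oPQ unfolding F_kappa_space_def by blast
  define f :: "'a \<Rightarrow> real" where "f = (\<lambda>y. if y \<in> Q then 1 else 0)"
  have PQT: "P \<union> Q \<subseteq> topspace S" using oPQ openin_subset by blast
  have cont: "continuous_map (subtopology S (P \<union> Q)) euclideanreal f"
    unfolding continuous_map_def
  proof (intro conjI allI impI)
    show "f \<in> topspace (subtopology S (P \<union> Q)) \<rightarrow> topspace euclideanreal" by simp
    fix U :: "real set"
    have eq: "{y \<in> topspace (subtopology S (P \<union> Q)). f y \<in> U} =
       (if (0::real) \<in> U then P else {}) \<union> (if (1::real) \<in> U then Q else {})"
      using PQT assms(6) by (auto simp: f_def)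
    have "openin (subtopology S (P \<union> Q)) P" "openin (subtopology S (P \<union> Q)) Q"
      "openin (subtopology S (P \<union> Q)) {}"
      using openin_open_subtopology[OF oPQ] assms(4,5) by auto
    then show "openin (subtopology S (P \<union> Q)) {y \<in> topspace (subtopology S (P \<union> Q)). f y \<in> U}"
      unfolding eq by auto
  qed
  have "f ` (P \<union> Q) \<subseteq> {0, 1}" by (auto simp: f_def)
  then have bd: "bounded (f ` (P \<union> Q))" by (meson bounded_subset finite.emptyI finite_imp_bounded finite_insert)
  obtain g where g: "continuous_map S euclideanreal g" "\<forall>y\<in>P \<union> Q. g y = f y"
    using ce cont bd unfolding C_star_embedded_def by blast
  have c1: "closedin S {y \<in> topspace S. g y \<in> {0}}"
    by (rule closedin_continuous_map_preimage[OF g(1)]) simp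
  have c2: "closedin S {y \<in> topspace S. g y \<in> {1}}"
    by (rule closedin_continuous_map_preimage[OF g(1)]) simp
  obtain B where B: "clopenin S B" "{y \<in> topspace S. g y \<in> {0}} \<subseteq> B"
     "B \<inter> {y \<in> topspace S. g y \<in> {1}} = {}"
  proof -
    have "{y \<in> topspace S. g y \<in> {0}} \<inter> {y \<in> topspace S. g y \<in> {1}} = {}" by auto
    from clopen_sep[OF assms(1,2) c1 c2 this] show ?thesis using that by blast
  qed
  have "P \<subseteq> {y \<in> topspace S. g y \<in> {0}}" using g(2) PQT assms(6) by (auto simp: f_def)
  moreover have "Q \<subseteq> {y \<in> topspace S. g y \<in> {1}}" using g(2) PQT by (auto simp: f_def)
  ultimately show ?thesis using B by blast
qed

lemma trace_clopen:
  assumes "clopenin (subtopology S Y) C" "openin S Y" "clopenin S M" "M \<subseteq> Y"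
  shows "clopenin S (C \<inter> M)"
proof -
  have "openin (subtopology S Y) C" using assms(1) unfolding clopenin_def by simp
  then have oC: "openin S C" using openin_open_subtopology[OF assms(2)] by simp
  have "closedin (subtopology S Y) C" using assms(1) unfolding clopenin_def by simp
  then obtain F where F: "closedin S F" "C = F \<inter> Y" unfolding closedin_subtopology by (elim exE conjE)
  have e: "C \<inter> M = F \<inter> M" using F assms(4) by blast
  have "openin S (C \<inter> M)" using oC assms(3) unfolding clopenin_def by (simp add: openin_Int)
  moreover have "closedin S (C \<inter> M)" unfolding e using F(1) assms(3) unfolding clopenin_def by (simp add: closedin_Int)
  ultimately show ?thesis unfolding clopenin_def by simp
qed

lemma type_lessI:
  assumes "\<forall>j\<in>D. clopenin S (h j)" "|D| <o |K|"
  shows "type_less S K (\<Union>j\<in>D. h j)"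
proof -
  have "|h ` D| <o |K|" using card_of_image assms(2) by (rule ordLeq_ordLess_trans)
  then show ?thesis unfolding type_less_def using assms(1) by blast
qed

lemma type_less_Un:
  assumes "infinite K" "type_less S K U1" "type_less S K U2"
  shows "type_less S K (U1 \<union> U2)"
proof -
  obtain F1 F2 where "\<forall>C\<in>F1. clopenin S C" "\<Union>F1 = U1" "|F1| <o |K|"
    "\<forall>C\<in>F2. clopenin S C" "\<Union>F2 = U2" "|F2| <o |K|" using assms unfolding type_less_def by metis
  moreover have "|F1 \<union> F2| <o |K|" using card_of_Un_ordLess_infinite assms(1) calculation by blast
  ultimately show ?thesis unfolding type_less_def
    by (intro exI[of _ "F1 \<union> F2"]) auto
qed

lemma type_less_open:
  assumes "type_less S K U" shows "openin S U"
proof -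
  obtain F where F: "\<forall>C\<in>F. clopenin S C" "\<Union>F = U" using assms unfolding type_less_def by blast
  then have "\<forall>C\<in>F. openin S C" unfolding clopenin_def by simp
  then have "openin S (\<Union>F)" by (intro openin_Union) simp
  then show ?thesis using F(2) by simp
qed

theorem lemma6p7:
  fixes K :: "'k set" and S :: "'a topology"
  assumes "infinite K"
    and "kappa_eq_kappa_less_kappa K"
    and "kappa_Parovicenko S K"
    and "has_weight S K"
    and "x \<in> topspace S"
    and "X = subtopology S (topspace S - {x})"
    and "openin X V" and "openin X W" and "V \<inter> W = {}"
    and "type_less X K V" and "type_less X K W"
  shows "\<exists>A. clopenin X A \<and> V \<subseteq> A \<and> W \<inter> A = {}"
proof -
  define T where "T = topspace S"
  define Y where "Y = T - {x}"
  have cs: "compact_space S" and zd: "zero_dim S" and Fk: "F_kappa_space S K"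
    and Hs: "Hausdorff_space S"
    using assms(3) unfolding kappa_Parovicenko_def by auto
  have "t1_space S" using Hs by (rule Hausdorff_imp_t1_space)
  then have "closedin S {x}" using t1_space_closedin_singleton assms(5) by metis
  then have oY: "openin S Y" unfolding Y_def T_def by (simp add: closedin_def)
  have XY: "X = subtopology S Y" using assms(6) Y_def T_def by simp
  have oV: "openin S V" and VY: "V \<subseteq> Y" using assms(7) XY openin_open_subtopology[OF oY] by auto
  have oW: "openin S W" and WY: "W \<subseteq> Y" using assms(8) XY openin_open_subtopology[OF oY] by auto
  obtain FV where FV: "\<forall>C\<in>FV. clopenin X C" "\<Union>FV = V" "|FV| <o |K|"
    using assms(10) unfolding type_less_def by blast
  obtain FW where FW: "\<forall>C\<in>FW. clopenin X C" "\<Union>FW = W" "|FW| <o |K|"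
    using assms(11) unfolding type_less_def by blast
  obtain B0 where B0: "is_base S B0" "\<forall>b\<in>B0. clopenin S b"
    using zd unfolding zero_dim_def by blast
  obtain Bw where Bw: "is_base S Bw" "|Bw| =o |K|"
    using assms(4) unfolding has_weight_def by blast
  obtain h where h: "bij_betw h K Bw"
    using Bw(2) card_of_ordIso ordIso_symmetric by blast
  define M where "M b = (if \<exists>M. clopenin S M \<and> b \<subseteq> M \<and> x \<notin> M
        then (SOME M. clopenin S M \<and> b \<subseteq> M \<and> x \<notin> M) else {})" for b
  have M: "clopenin S (M b) \<and> x \<notin> M b" for b
  proof (cases "\<exists>M. clopenin S M \<and> b \<subseteq> M \<and> x \<notin> M")
    case True
    then show ?thesis unfolding M_def using someI_ex[OF True] by auto
  next
    case False
    then show ?thesis unfolding M_def clopenin_def by auto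
  qed
  have MT: "M b \<subseteq> Y" for b using M[of b] unfolding clopenin_def Y_def T_def
    using openin_subset by blast
  define N where "N k = T - M (h k)" for k
  have TN: "T - N k = M (h k)" for k unfolding N_def using MT Y_def by blast
  have cover: "\<exists>k\<in>K. y \<notin> N k" if y: "y \<in> Y" for y
  proof -
    obtain C where "C \<subseteq> B0" "\<Union>C = Y" using B0(1) oY unfolding is_base_def by blast
    then obtain c where c: "c \<in> B0" "y \<in> c" "c \<subseteq> Y" using y by blast
    have oc: "openin S c" using c B0(2) clopenin_def by blast
    obtain C2 where "C2 \<subseteq> Bw" "\<Union>C2 = c" using Bw(1) oc unfolding is_base_def by blast
    then obtain b where b: "b \<in> Bw" "y \<in> b" "b \<subseteq> c" using c by blast
    have ex: "\<exists>M. clopenin S M \<and> b \<subseteq> M \<and> x \<notin> M"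
      using c b B0(2) Y_def by blast
    then have "b \<subseteq> M b" unfolding M_def using someI_ex[OF ex] by auto
    moreover obtain k where "k \<in> K" "h k = b" using h b(1) unfolding bij_betw_def by blast
    ultimately show ?thesis using b(2) TN by blast
  qed
  have trace: "clopenin S (C \<inter> (T - N k))" if "C \<in> FV \<union> FW" for C k
    using trace_clopen[of S Y C "M (h k)"] that FV(1) FW(1) XY oY M MT TN by auto
  define r where "r = |K|"
  have wo: "wo_rel r" unfolding r_def wo_rel_def by (rule card_of_Well_order)
  have Fr: "Field r = K" unfolding r_def by (rule Field_card_of)
  define Uo where "Uo D = (\<Union>j\<in>D. T - N j)" for D
  define good where "good D A \<longleftrightarrow> D \<subseteq> K \<and> (\<forall>j\<in>D. \<forall>i. (i,j) \<in> r \<longrightarrow> i \<in> D) \<and> A \<subseteq> Uo D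
      \<and> (\<forall>j\<in>D. clopenin S (A \<inter> (T - N j))) \<and> V \<inter> Uo D \<subseteq> A \<and> W \<inter> A = {}" for D A
  define enc :: "'k set \<Rightarrow> 'a set \<Rightarrow> (('k + 'a) + 'a) set" where
    "enc D A = Inl ` Inl ` D \<union> Inl ` Inr ` A \<union> Inr ` (Uo D - A)" for D A
  define dD where "dD G = {k. Inl (Inl k) \<in> G}" for G :: "(('k + 'a) + 'a) set"
  define dA where "dA G = {a. Inl (Inr a) \<in> G}" for G :: "(('k + 'a) + 'a) set"
  define dR where "dR G = {a. Inr a \<in> G}" for G :: "(('k + 'a) + 'a) set"
  have dec: "dD (enc D A) = D" "dA (enc D A) = A" "dR (enc D A) = Uo D - A" for D A
    unfolding dD_def dA_def dR_def enc_def by auto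
  have recon: "G = Inl ` Inl ` dD G \<union> Inl ` Inr ` dA G \<union> Inr ` dR G" for G
    unfolding dD_def dA_def dR_def
  proof (rule set_eqI)
    fix z :: "('k + 'a) + 'a"
    show "z \<in> G \<longleftrightarrow> z \<in> Inl ` Inl ` {k. Inl (Inl k) \<in> G} \<union> Inl ` Inr ` {a. Inl (Inr a) \<in> G} \<union> Inr ` {a. Inr a \<in> G}"
    proof (cases z)
      case (Inl u) then show ?thesis by (cases u) auto
    qed auto
  qed
  define Fam where "Fam = {enc D A | D A. good D A}"
  have mono: "dD G1 \<subseteq> dD G2 \<and> dA G1 \<subseteq> dA G2 \<and> dR G1 \<subseteq> dR G2" if "G1 \<subseteq> G2" for G1 G2
    using that unfolding dD_def dA_def dR_def by auto
  have famE: "good (dD G) (dA G) \<and> dR G = Uo (dD G) - dA G" if "G \<in> Fam" for G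
    using that unfolding Fam_def by (auto simp: dec)
  have compat: "dA G2 \<inter> Uo (dD G1) = dA G1" if "G1 \<in> Fam" "G2 \<in> Fam" "G1 \<subseteq> G2" for G1 G2
  proof -
    have "dA G1 \<subseteq> Uo (dD G1)" using famE[OF that(1)] unfolding good_def by blast
    moreover have "dA G1 \<subseteq> dA G2" "dR G1 \<subseteq> dR G2" using mono[OF that(3)] by auto
    ultimately show ?thesis using famE[OF that(1)] famE[OF that(2)] by blast
  qed
  have chains: "\<Union>C \<in> Fam" if C: "C \<in> chains Fam" for C
  proof -
    have CF: "C \<subseteq> Fam" and ch: "\<forall>G1\<in>C. \<forall>G2\<in>C. G1 \<subseteq> G2 \<or> G2 \<subseteq> G1"
      using C unfolding chains_def chain_subset_def by auto
    define D where "D = (\<Union>G\<in>C. dD G)"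
    define A where "A = (\<Union>G\<in>C. dA G)"
    have dDU: "dD (\<Union>C) = D" "dA (\<Union>C) = A" "dR (\<Union>C) = (\<Union>G\<in>C. dR G)"
      unfolding D_def A_def dD_def dA_def dR_def by auto
    have gG: "good (dD G) (dA G)" "dR G = Uo (dD G) - dA G" if "G \<in> C" for G
      using famE CF that by auto
    have ODU: "Uo D = (\<Union>G\<in>C. Uo (dD G))" unfolding Uo_def D_def by auto
    have gp: "dD G \<subseteq> K" "\<forall>j\<in>dD G. \<forall>i. (i,j) \<in> r \<longrightarrow> i \<in> dD G" "dA G \<subseteq> Uo (dD G)"
      "\<forall>j\<in>dD G. clopenin S (dA G \<inter> (T - N j))" "V \<inter> Uo (dD G) \<subseteq> dA G" "W \<inter> dA G = {}"
      if "G \<in> C" for G using gG(1)[OF that] unfolding good_def by auto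
    have Aeq: "A \<inter> Uo (dD G) = dA G" if G: "G \<in> C" for G
    proof
      show "A \<inter> Uo (dD G) \<subseteq> dA G"
      proof
        fix a assume a: "a \<in> A \<inter> Uo (dD G)"
        then obtain G' where G': "G' \<in> C" "a \<in> dA G'" unfolding A_def by auto
        show "a \<in> dA G"
        proof (cases "G' \<subseteq> G")
          case True then show ?thesis using mono G' by blast
        next
          case False then have "G \<subseteq> G'" using ch G G' by blast
          then show ?thesis using compat[of G G'] CF G G' a by blast
        qed
      qed
      show "dA G \<subseteq> A \<inter> Uo (dD G)" using gp(3)[OF G] unfolding A_def using G by blast
    qed
    have Req: "(\<Union>G\<in>C. dR G) = Uo D - A"
    proof
      show "(\<Union>G\<in>C. dR G) \<subseteq> Uo D - A"
      proof
        fix a assume "a \<in> (\<Union>G\<in>C. dR G)"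
        then obtain G where G: "G \<in> C" "a \<in> dR G" by auto
        then have "a \<in> Uo (dD G)" "a \<notin> dA G" using gG(2)[OF G(1)] G(2) by auto
        then show "a \<in> Uo D - A" using Aeq[OF G(1)] ODU G(1) by blast
      qed
      show "Uo D - A \<subseteq> (\<Union>G\<in>C. dR G)"
      proof
        fix a assume a: "a \<in> Uo D - A"
        then obtain G where G: "G \<in> C" "a \<in> Uo (dD G)" using ODU by auto
        then have "a \<notin> dA G" using a Aeq by blast
        then show "a \<in> (\<Union>G\<in>C. dR G)" using G gG(2)[OF G(1)] by blast
      qed
    qed
    have UC: "\<Union>C = enc D A"
    proof -
      have "\<Union>C = Inl ` Inl ` dD (\<Union>C) \<union> Inl ` Inr ` dA (\<Union>C) \<union> Inr ` dR (\<Union>C)" by (rule recon)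
      also have "\<dots> = enc D A" by (simp only: dDU Req enc_def)
      finally show ?thesis .
    qed
    have "good D A"
      unfolding good_def
    proof (intro conjI ballI allI impI)
      show "D \<subseteq> K" using gp(1) unfolding D_def by blast
      show "i \<in> D" if "j \<in> D" "(i, j) \<in> r" for i j
        using that gp(2) unfolding D_def by blast
      show "A \<subseteq> Uo D" using gp(3) ODU unfolding A_def by blast
      show "clopenin S (A \<inter> (T - N j))" if j: "j \<in> D" for j
      proof -
        obtain G where G: "G \<in> C" "j \<in> dD G" using j D_def by auto
        have "T - N j \<subseteq> Uo (dD G)" using G unfolding Uo_def by blast
        then have "A \<inter> (T - N j) = dA G \<inter> (T - N j)" using Aeq[OF G(1)] by blast
        then show ?thesis using gp(4)[OF G(1)] G(2) by simp
      qed
      show "V \<inter> Uo D \<subseteq> A" using gp(5) ODU unfolding A_def by blast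
      show "W \<inter> A = {}" using gp(6) unfolding A_def by blast
    qed
    then show ?thesis using UC unfolding Fam_def by blast
  qed
  obtain Gm where Gm: "Gm \<in> Fam" "\<forall>G\<in>Fam. Gm \<subseteq> G \<longrightarrow> G = Gm"
    using Zorn_Lemma[OF ballI[OF chains]] by blast
  define D where "D = dD Gm"
  define A where "A = dA Gm"
  have gDA: "good D A" using famE[OF Gm(1)] unfolding D_def A_def by blast
  have GmE: "Gm = enc D A"
  proof -
    have "Gm = Inl ` Inl ` dD Gm \<union> Inl ` Inr ` dA Gm \<union> Inr ` dR Gm" by (rule recon)
    also have "\<dots> = enc D A" using famE[OF Gm(1)] unfolding D_def A_def enc_def by simp
    finally show ?thesis .
  qed
  have DK: "D = K"
  proof (rule ccontr)
    assume "D \<noteq> K"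
    then have ne: "K - D \<noteq> {}" using gDA unfolding good_def by blast
    define k where "k = wo_rel.minim r (K - D)"
    have kin: "k \<in> K - D" unfolding k_def using wo_rel.minim_in[OF wo, of "K - D"] ne Fr by blast
    have kleast: "(k, j) \<in> r" if "j \<in> K - D" for j
      unfolding k_def using wo_rel.minim_least[OF wo, of "K - D" j] that Fr by blast
    have Dunder: "D \<subseteq> underS r k"
    proof
      fix j assume j: "j \<in> D"
      have "j \<in> K" using j gDA unfolding good_def by blast
      then have "(j,k) \<in> r \<or> (k,j) \<in> r" using wo_rel.TOTALS[OF wo] kin Fr by blast
      moreover have "(k,j) \<notin> r" using j kin gDA unfolding good_def by blast
      ultimately show "j \<in> underS r k" using j kin unfolding underS_def by auto
    qed
    have DsubK: "D \<subseteq> K" using gDA unfolding good_def by simp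
    have Dsmall: "|D| <o |K|"
      using card_of_mono1[OF Dunder] card_of_underS[of r k] kin Fr
      unfolding r_def using card_of_Card_order ordLeq_ordLess_trans by blast
    define P where "P = A \<union> V \<inter> (T - N k)"
    define Q where "Q = (Uo D - A) \<union> W \<inter> (T - N k)"
    have AOD: "A \<subseteq> Uo D" "V \<inter> Uo D \<subseteq> A" "W \<inter> A = {}" "\<forall>j\<in>D. clopenin S (A \<inter> (T - N j))"
      using gDA unfolding good_def by auto
    have eq1: "A = (\<Union>j\<in>D. A \<inter> (T - N j))" using AOD(1) unfolding Uo_def by blast
    have eq2: "V \<inter> (T - N k) = (\<Union>C\<in>FV. C \<inter> (T - N k))" using FV(2) by blast
    have eq3: "Uo D - A = (\<Union>j\<in>D. (T - N j) - A \<inter> (T - N j))" unfolding Uo_def by blast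
    have eq4: "W \<inter> (T - N k) = (\<Union>C\<in>FW. C \<inter> (T - N k))" using FW(2) by blast
    have TNc: "clopenin S (T - N j)" for j using TN M by simp
    have t1: "type_less S K A" using type_lessI[of D S "\<lambda>j. A \<inter> (T - N j)" K] AOD(4) Dsmall eq1 by simp
    have t2: "type_less S K (V \<inter> (T - N k))"
      using type_lessI[of FV S "\<lambda>C. C \<inter> (T - N k)" K] trace FV(3) eq2 by simp
    have t3: "type_less S K (Uo D - A)"
    proof -
      have "\<forall>j\<in>D. clopenin S ((T - N j) - A \<inter> (T - N j))"
        using AOD(4) TNc unfolding clopenin_def by (auto intro: openin_diff closedin_diff)
      then show ?thesis using type_lessI[of D S "\<lambda>j. (T - N j) - A \<inter> (T - N j)" K] Dsmall eq3 by simp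
    qed
    have t4: "type_less S K (W \<inter> (T - N k))"
      using type_lessI[of FW S "\<lambda>C. C \<inter> (T - N k)" K] trace FW(3) eq4 by simp
    have tPQ: "type_less S K (P \<union> Q)" unfolding P_def Q_def
      by (intro type_less_Un[OF assms(1)] t1 t2 t3 t4)
    have oP: "openin S P" unfolding P_def by (rule type_less_open[OF type_less_Un[OF assms(1) t1 t2]])
    have oQ: "openin S Q" unfolding Q_def by (rule type_less_open[OF type_less_Un[OF assms(1) t3 t4]])
    have dPQ: "P \<inter> Q = {}" unfolding P_def Q_def using AOD assms(9) by blast
    obtain B where B: "clopenin S B" "P \<subseteq> B" "B \<inter> Q = {}"
      using core[OF cs zd Fk oP oQ dPQ tPQ] by blast
    have BOD: "B \<inter> Uo D = A" using B AOD(1) unfolding P_def Q_def by blast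
    define A' where "A' = A \<union> B \<inter> (T - N k)"
    have ODk: "Uo (insert k D) = Uo D \<union> (T - N k)" unfolding Uo_def by blast
    have g': "good (insert k D) A'"
      unfolding good_def
    proof (intro conjI ballI allI impI)
      show "insert k D \<subseteq> K" using kin DsubK by blast
      show "i \<in> insert k D" if "j \<in> insert k D" "(i, j) \<in> r" for i j
      proof (cases "j = k")
        case True
        show ?thesis
        proof (rule ccontr)
          assume ni: "i \<notin> insert k D"
          have "i \<in> K" using that Fr unfolding Field_def by blast
          then have "(k, i) \<in> r" using kleast ni by blast
          then have "i = k" using that True wo_rel.ANTISYM[OF wo] unfolding antisym_def by blast
          then show False using ni by blast
        qed
      next
        case False then show ?thesis using that gDA unfolding good_def by blast
      qed
      show "A' \<subseteq> Uo (insert k D)" unfolding A'_def ODk using AOD by blast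
      show "clopenin S (A' \<inter> (T - N j))" if j: "j \<in> insert k D" for j
      proof (cases "j = k")
        case True
        have "A' \<inter> (T - N j) = B \<inter> (T - N k)" unfolding A'_def True using B(2) P_def by blast
        then show ?thesis using B(1) TNc unfolding clopenin_def by (auto intro: openin_Int closedin_Int)
      next
        case False
        then have jD: "j \<in> D" using j by blast
        have "T - N j \<subseteq> Uo D" using jD unfolding Uo_def by blast
        then have "A' \<inter> (T - N j) = A \<inter> (T - N j)" unfolding A'_def using BOD by blast
        then show ?thesis using AOD(4) jD by simp
      qed
      show "V \<inter> Uo (insert k D) \<subseteq> A'" unfolding ODk A'_def using AOD B(2) P_def by blast
      show "W \<inter> A' = {}" unfolding A'_def using AOD B(3) Q_def by blast
    qed
    have sub: "Gm \<subseteq> enc (insert k D) A'"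
      unfolding GmE enc_def A'_def ODk using BOD by blast
    have "enc (insert k D) A' \<in> Fam" using g' unfolding Fam_def by blast
    then have "enc (insert k D) A' = Gm" using Gm(2) sub by blast
    then have "insert k D = D" using dec(1)[of "insert k D" A'] D_def by simp
    then show False using kin by blast
  qed
  have OK: "Uo K = Y"
  proof
    show "Uo K \<subseteq> Y" unfolding Uo_def using TN MT by blast
    show "Y \<subseteq> Uo K" unfolding Uo_def using cover Y_def T_def N_def by blast
  qed
  have AOD: "A \<subseteq> Y" "V \<subseteq> A" "W \<inter> A = {}" "\<forall>j\<in>K. clopenin S (A \<inter> (T - N j))"
    using gDA VY OK unfolding good_def DK by auto
  have TNc: "clopenin S (T - N j)" for j using TN M by simp
  have oA: "openin S A"
  proof -
    have "A = (\<Union>j\<in>K. A \<inter> (T - N j))" using AOD(1) OK unfolding Uo_def by blast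
    moreover have "openin S (\<Union>j\<in>K. A \<inter> (T - N j))"
      using AOD(4) unfolding clopenin_def by (intro openin_Union) auto
    ultimately show ?thesis by simp
  qed
  have oYA: "openin S (Y - A)"
  proof -
    have "Y - A = (\<Union>j\<in>K. (T - N j) - A \<inter> (T - N j))" using OK unfolding Uo_def by blast
    moreover have "\<forall>j\<in>K. openin S ((T - N j) - A \<inter> (T - N j))"
      using AOD(4) TNc unfolding clopenin_def by (auto intro: openin_diff)
    moreover have "openin S (\<Union>j\<in>K. (T - N j) - A \<inter> (T - N j))"
      using calculation(2) by (intro openin_Union) auto
    ultimately show ?thesis by simp
  qed
  have "clopenin X A" unfolding clopenin_def XY
  proof
    show "openin (subtopology S Y) A" using oA AOD(1) openin_open_subtopology[OF oY] by blast
    have tY: "topspace (subtopology S Y) = Y" using oY openin_subset by auto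
    show "closedin (subtopology S Y) A" unfolding closedin_def tY
      using oYA AOD(1) openin_open_subtopology[OF oY] by blast
  qed
  then show ?thesis using AOD by blast
qed

end
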